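(* Let $k$ be a positive integer and suppose $\frac{k}{k+1}<p\le\frac{k+1}{k+2}<t\le 1$. Then bold play is optimal, i.e. $\pi(p,t)=p$ (attained by $c_1=1$, $c_i=0$ for $i\ge 2$).
   Context: Let $\beta_1,\beta_2,\ldots$ be independent Bernoulli random variables with success probability $p$. A stake sequence is a sequence $\gamma=(c_1,c_2,\ldots)$ of non-negative reals with $c_1\ge c_2\ge\cdots$ and $\sum_i c_i=1$; write $S_\gamma=\sum_i c_i\beta_i$. For $0\le p\le t\le 1$ define $\pi(p,t)=\sup\{\mathbf P(S_\gamma\ge t)\mid \gamma \text{ a stake sequence}\}$. Bold play for threshold $t$ is the stake sequence with $c_i=\frac1m$ for $i\le m$ and $c_i=0$ for $i>m$, where $m=\lfloor 1/t\rfloor$; bold play is optimal if it attains $\pi(p,t)$. For $t>\frac12$ bold play is $c_1=1$, with success probability $p$. *)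

theory Defs
  imports "HOL-Probability.Probability"
begin

text \<open>Probability space of the i.i.d. Bernoulli(p) sequence beta_1, beta_2, ...
  (indexed from 0 here): the infinite product of Bernoulli measures on nat => bool.\<close>
definition bern_space :: "real \<Rightarrow> (nat \<Rightarrow> bool) measure" where
  "bern_space p = (\<Pi>\<^sub>M i\<in>(UNIV::nat set). measure_pmf (bernoulli_pmf p))"

text \<open>Stake sequence: non-negative, non-increasing, summing to 1 (index shifted to start at 0).\<close>
definition stake_seq :: "(nat \<Rightarrow> real) \<Rightarrow> bool" where
  "stake_seq c \<longleftrightarrow> (\<forall>i. 0 \<le> c i) \<and> (\<forall>i. c (Suc i) \<le> c i) \<and> c sums 1"

definition stake_sum :: "(nat \<Rightarrow> real) \<Rightarrow> (nat \<Rightarrow> bool) \<Rightarrow> real" where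
  "stake_sum c \<omega> = (\<Sum>i. c i * (if \<omega> i then 1 else 0))"

definition success_prob :: "real \<Rightarrow> (nat \<Rightarrow> real) \<Rightarrow> real \<Rightarrow> real" where
  "success_prob p c t = measure (bern_space p) {\<omega> \<in> space (bern_space p). stake_sum c \<omega> \<ge> t}"

definition opt_prob :: "real \<Rightarrow> real \<Rightarrow> real" where
  "opt_prob p t = (SUP c\<in>{c. stake_seq c}. success_prob p c t)"

definition bold_play :: "real \<Rightarrow> nat \<Rightarrow> real" where
  "bold_play t i = (let m = nat \<lfloor>1 / t\<rfloor> in if i < m then 1 / real m else 0)"

end

theory Submission
  imports Defs
begin


lemma shift_closed:
  fixes N :: int and Y :: "int set"
  assumes N: "N > 0" and Y: "Y \<subseteq> {0..<N}" and y0: "y0 \<in> Y"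
    and cl: "\<forall>y\<in>Y. (y + 1) mod N \<in> Y"
  shows "Y = {0..<N}"
proof -
  have all: "(y0 + int m) mod N \<in> Y" for m :: nat
  proof (induction m)
    case 0
    have "y0 mod N = y0" using Y y0 by auto
    then show ?case using y0 by simp
  next
    case (Suc m)
    have "(y0 + int (Suc m)) mod N = ((y0 + int m) + 1) mod N" by (simp add: ac_simps)
    also have "\<dots> = ((y0 + int m) mod N + 1) mod N" by (rule mod_add_left_eq[symmetric])
    finally have "(y0 + int (Suc m)) mod N = ((y0 + int m) mod N + 1) mod N" .
    then show ?case using cl Suc by simp
  qed
  show ?thesis
  proof
    show "{0..<N} \<subseteq> Y"
    proof
      fix z assume z: "z \<in> {0..<N}"
      let ?m = "nat ((z - y0) mod N)"
      have "int ?m = (z - y0) mod N" using N by simp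
      hence "(y0 + int ?m) mod N = (y0 + (z - y0) mod N) mod N" by simp
      also have "\<dots> = (y0 + (z - y0)) mod N" by (simp add: mod_add_right_eq)
      also have "\<dots> = z" using z by simp
      finally show "z \<in> Y" using all[of ?m] by simp
    qed
  qed (use Y in auto)
qed

lemma mink:
  fixes N :: int and X :: "int set" and L :: nat
  assumes N: "N > 0" and X: "X \<subseteq> {0..<N}" "X \<noteq> {}"
  shows "min N (int (card X) + int L) \<le> int (card ((\<lambda>(x,l). (x + int l) mod N) ` (X \<times> {..L})))"
proof (induction L)
  case 0
  have md: "x mod N = x" if "x \<in> X" for x using X(1) that by auto
  have "(\<lambda>(x,l). (x + int l) mod N) ` (X \<times> {..0}) = X"
  proof (intro equalityI subsetI)
    fix z assume "z \<in> (\<lambda>(x,l). (x + int l) mod N) ` (X \<times> {..0})"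
    then obtain x where "x \<in> X" "z = x mod N" by auto
    then show "z \<in> X" using md by simp
  next
    fix z assume z: "z \<in> X"
    have "z = (\<lambda>(x,l). (x + int l) mod N) (z, 0)" using md[OF z] by simp
    moreover have "(z, 0::nat) \<in> X \<times> {..0}" using z by simp
    ultimately show "z \<in> (\<lambda>(x,l). (x + int l) mod N) ` (X \<times> {..0})" by blast
  qed
  then show ?case by simp
next
  case (Suc L)
  define S where "S L = (\<lambda>(x,l). (x + int l) mod N) ` (X \<times> {..L})" for L
  have Ssub: "S L \<subseteq> {0..<N}" for L unfolding S_def using N by auto
  have fin: "finite (S L)" for L using Ssub[of L] finite_subset by blast
  have SSuc: "S (Suc L) = S L \<union> (\<lambda>y. (y+1) mod N) ` S L"
  proof (intro equalityI subsetI)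
    fix z assume "z \<in> S (Suc L)"
    then obtain x l where xl: "x \<in> X" "l \<le> Suc L" "z = (x + int l) mod N" unfolding S_def by auto
    show "z \<in> S L \<union> (\<lambda>y. (y+1) mod N) ` S L"
    proof (cases "l \<le> L")
      case True then show ?thesis using xl unfolding S_def by auto
    next
      case False
      hence "l = Suc L" using xl by simp
      hence "z = ((x + int L) + 1) mod N" using xl by (simp add: ac_simps)
      hence "z = ((x + int L) mod N + 1) mod N" by (simp add: mod_add_left_eq)
      moreover have "(x + int L) mod N \<in> S L" using xl unfolding S_def by auto
      ultimately show ?thesis by blast
    qed
  next
    fix z assume "z \<in> S L \<union> (\<lambda>y. (y+1) mod N) ` S L"
    then show "z \<in> S (Suc L)"
    proof
      assume "z \<in> S L" then show ?thesis unfolding S_def by force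
    next
      assume "z \<in> (\<lambda>y. (y+1) mod N) ` S L"
      then obtain x l where xl: "x \<in> X" "l \<le> L" "z = ((x + int l) mod N + 1) mod N" unfolding S_def by auto
      hence "z = ((x + int l) + 1) mod N" by (simp add: mod_add_left_eq)
      hence "z = (x + int (Suc l)) mod N" by (simp add: ac_simps)
      then show ?thesis using xl unfolding S_def by force
    qed
  qed
  have IH: "min N (int (card X) + int L) \<le> int (card (S L))" using Suc.IH unfolding S_def .
  show ?case
  proof (cases "N \<le> int (card (S L))")
    case True
    have "card (S L) \<le> card (S (Suc L))" using SSuc fin by (intro card_mono) auto
    then show ?thesis using True unfolding S_def by simp
  next
    case False
    have "S L \<noteq> {0..<N}"
    proof
      assume "S L = {0..<N}"
      then have "int (card (S L)) = N" using N by simp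
      then show False using False by simp
    qed
    moreover have "S L \<noteq> {}" using X(2) unfolding S_def by auto
    ultimately obtain y where y: "y \<in> S L" "(y+1) mod N \<notin> S L"
      using shift_closed[OF N Ssub] by blast
    have "S L \<subset> S (Suc L)" using SSuc y by blast
    hence "card (S L) < card (S (Suc L))" using fin by (intro psubset_card_mono) auto
    then show ?thesis using IH unfolding S_def by simp
  qed
qed


lemma comb:
  fixes N a :: int and r :: nat and G :: "int set"
  assumes N: "N > 0" and r: "2 \<le> r" and G: "G \<subseteq> {0..<N}"
    and h1: "int (r - 1) * a < N" and h2: "N \<le> int r * a"
    and P: "\<And>\<theta>. \<theta> \<in> {0..<N} \<Longrightarrow> (\<forall>j<r-1. (\<theta> + int j * a) mod N \<notin> G) \<Longrightarrow>
              (\<forall>x\<in>{0..int r * a - N}. (\<theta> - a + x) mod N \<in> G)"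
  shows "a \<le> int (card G)"
proof -
  let ?Z = "{0..<N}"
  have apos: "a > 0"
  proof (rule ccontr)
    assume "\<not> a > 0"
    hence "int r * a \<le> 0" using r by (simp add: mult_nonneg_nonpos)
    thus False using N h2 by simp
  qed
  have finG: "finite G" using G finite_subset by blast
  define D where "D = {\<theta>\<in>?Z. \<forall>j<r-1. (\<theta> + int j * a) mod N \<notin> G}"
  define B where "B j = {\<theta>\<in>?Z. (\<theta> + int j * a) mod N \<in> G}" for j :: nat
  have injZ: "inj_on (\<lambda>\<theta>. (\<theta> + c) mod N) ?Z" for c :: int
  proof (rule inj_onI)
    fix x y assume xy: "x \<in> ?Z" "y \<in> ?Z" "(x + c) mod N = (y + c) mod N"
    hence "((x + c) - c) mod N = ((y + c) - c) mod N" by (metis mod_diff_left_eq)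
    thus "x = y" using xy by simp
  qed
  have cardB: "card (B j) \<le> card G" for j
  proof (rule card_inj_on_le[OF _ _ finG])
    show "inj_on (\<lambda>\<theta>. (\<theta> + int j * a) mod N) (B j)" using injZ unfolding B_def
      by (rule inj_on_subset) auto
    show "(\<lambda>\<theta>. (\<theta> + int j * a) mod N) ` B j \<subseteq> G" unfolding B_def by auto
  qed
  have finB: "finite (B j)" for j unfolding B_def by (rule finite_subset[of _ ?Z]) auto
  have "?Z - D \<subseteq> (\<Union>j<r-1. B j)" unfolding D_def B_def by auto
  hence "card (?Z - D) \<le> card (\<Union>j<r-1. B j)" using finB by (intro card_mono) auto
  also have "\<dots> \<le> (\<Sum>j<r-1. card (B j))" by (rule card_UN_le) simp
  also have "\<dots> \<le> (\<Sum>j<r-1. card G)" by (intro sum_mono cardB)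
  also have "\<dots> = (r-1) * card G" by simp
  finally have c1: "card (?Z - D) \<le> (r-1) * card G" .
  have DZ: "D \<subseteq> ?Z" unfolding D_def by auto
  have finD: "finite D" using DZ finite_subset by blast
  have cdz: "card (?Z - D) = card ?Z - card D" by (rule card_Diff_subset[OF finD DZ])
  have "card D \<le> card ?Z" by (rule card_mono[OF _ DZ]) simp
  hence "card ?Z = card D + card (?Z - D)" using cdz by simp
  moreover have "int (card ?Z) = N" using N by simp
  ultimately have "N = int (card D) + int (card (?Z - D))" by linarith
  moreover have "int (card (?Z - D)) \<le> int (r-1) * int (card G)"
    using c1 by (metis of_nat_le_iff of_nat_mult)
  ultimately have cD: "N \<le> int (card D) + int (r-1) * int (card G)" by linarith
  show ?thesis
  proof (cases "D = {}")
    case True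
    hence "N \<le> int (r-1) * int (card G)" using cD by simp
    hence "int (r-1) * a < int (r-1) * int (card G)" using h1 by linarith
    moreover have "int (r-1) > 0" using r by simp
    ultimately show ?thesis by (simp add: mult_less_cancel_left)
  next
    case False
    define X where "X = (\<lambda>\<theta>. (\<theta> - a) mod N) ` D"
    have cX: "card X = card D" unfolding X_def
      using injZ[of "-a"] DZ by (intro card_image) (auto intro: inj_on_subset)
    have XZ: "X \<subseteq> ?Z" unfolding X_def using N by auto
    have Xne: "X \<noteq> {}" unfolding X_def using False by simp
    define L where "L = nat (int r * a - N)"
    have m: "min N (int (card X) + int L) \<le> int (card ((\<lambda>(x,l). (x + int l) mod N) ` (X \<times> {..L})))"
      by (rule mink[OF N XZ Xne])
    have sub: "(\<lambda>(x,l). (x + int l) mod N) ` (X \<times> {..L}) \<subseteq> G"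
    proof
      fix z assume "z \<in> (\<lambda>(x,l). (x + int l) mod N) ` (X \<times> {..L})"
      then obtain \<theta> l where tl: "\<theta> \<in> D" "l \<le> L" "z = ((\<theta> - a) mod N + int l) mod N"
        unfolding X_def by auto
      have z: "z = (\<theta> - a + int l) mod N" using tl(3) by (simp add: mod_add_left_eq)
      have "\<theta> \<in> ?Z" "\<forall>j<r-1. (\<theta> + int j * a) mod N \<notin> G" using tl(1) unfolding D_def by auto
      from P[OF this] have "\<forall>x\<in>{0..int r * a - N}. (\<theta> - a + x) mod N \<in> G" .
      moreover have "int l \<in> {0..int r * a - N}" using tl(2) h2 unfolding L_def by auto
      ultimately show "z \<in> G" using z by blast
    qed
    have "card ((\<lambda>(x,l). (x + int l) mod N) ` (X \<times> {..L})) \<le> card G"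
      by (rule card_mono[OF finG sub])
    hence m2: "min N (int (card D) + int L) \<le> int (card G)" using m cX by simp
    have rG: "int r * int (card G) \<ge> int r * a"
    proof (cases "N \<le> int (card D) + int L")
      case True
      hence "N \<le> int (card G)" using m2 by simp
      moreover have "a \<le> int (r-1) * a" using r apos by (simp add: mult_le_cancel_right1) 
      ultimately have "a \<le> int (card G)" using h1 by simp
      thus ?thesis using r by (simp add: mult_left_mono)
    next
      case False
      hence "int (card D) + int L \<le> int (card G)" using m2 by simp
      hence "int (card D) + (int r * a - N) \<le> int (card G)" using h2 unfolding L_def by simp
      hence "N - int (r-1) * int (card G) + (int r * a - N) \<le> int (card G)" using cD by linarith
      moreover have "int (r-1) = int r - 1" using r by simp
      ultimately show ?thesis by (simp add: algebra_simps)
    qed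
    thus ?thesis using r by (simp add: mult_le_cancel_left)
  qed
qed



lemma window:
  fixes N a :: int and r n :: nat and u :: "nat \<Rightarrow> int" and c :: "nat \<Rightarrow> real" and s :: real
  assumes N: "N > 0" and r: "2 \<le> r"
    and h1: "int (r - 1) * a < N" and h2: "N \<le> int r * a"
    and c: "\<And>i. 0 \<le> c i" and rs: "real r * s < (\<Sum>i<n. c i)"
  shows "a \<le> int (card {\<theta>\<in>{0..<N}. s < (\<Sum>i<n. if (u i - \<theta>) mod N < a then c i else 0)})"
proof -
  define w where "w \<theta> = (\<Sum>i<n. if (u i - \<theta>) mod N < a then c i else 0)" for \<theta>
  have apos: "a > 0"
  proof (rule ccontr)
    assume "\<not> a > 0"
    hence "int r * a \<le> 0" using r by (simp add: mult_nonneg_nonpos)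
    thus False using N h2 by simp
  qed
  have "1 * a \<le> int (r-1) * a" by (rule mult_right_mono) (use r apos in auto)
  hence aN: "a < N" using h1 by simp
  have wmod: "w (x mod N) = w x" for x
    unfolding w_def by (simp add: mod_diff_right_eq)
  let ?G = "{\<theta>\<in>{0..<N}. s < w \<theta>}"
  have "a \<le> int (card ?G)"
  proof (rule comb[OF N r _ h1 h2])
    show "?G \<subseteq> {0..<N}" by auto
  next
    fix \<theta> assume \<theta>: "\<theta> \<in> {0..<N}" and H: "\<forall>j<r-1. (\<theta> + int j * a) mod N \<notin> ?G"
    have wj: "w (\<theta> + int j * a) \<le> s" if "j < r - 1" for j
    proof -
      have "(\<theta> + int j * a) mod N \<in> {0..<N}" using N by simp
      hence "\<not> s < w ((\<theta> + int j * a) mod N)" using H that by blast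
      thus ?thesis using wmod by simp
    qed
    define d where "d i = (u i - \<theta>) mod N" for i
    have d0: "0 \<le> d i" "d i < N" for i unfolding d_def using N by auto
    have memb: "(u i - (\<theta> + int j * a)) mod N < a"
      if "int j * a \<le> d i" "d i < int j * a + a" for i j
    proof -
      have ja: "int j * a \<ge> 0" using apos by simp
      have "(u i - (\<theta> + int j * a)) mod N = (d i - int j * a) mod N"
        unfolding d_def by (simp add: mod_diff_left_eq diff_diff_eq)
      also have "\<dots> = d i - int j * a" by (rule mod_pos_pos_trivial) (use that d0[of i] ja in linarith)+
      finally show ?thesis using that by simp
    qed
    have cover: "\<exists>j<r-1. int j * a \<le> d i \<and> d i < int j * a + a" if "d i < int (r-1) * a" for i
    proof -
      define j where "j = nat (d i div a)"
      have jj: "int j = d i div a" unfolding j_def using d0[of i] apos by (simp add: pos_imp_zdiv_nonneg_iff)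
      have dm: "d i div a * a + d i mod a = d i" by (rule div_mult_mod_eq)
      have m1: "0 \<le> d i mod a" "d i mod a < a" using apos by auto
      have ja: "int j * a = d i div a * a" using jj by simp
      have l: "int j * a \<le> d i" using ja dm m1 by linarith
      have u: "d i < int j * a + a" using ja dm m1 by linarith
      have "int j * a < int (r-1) * a" using l that by linarith
      hence "int j < int (r-1)" using apos by (simp add: mult_less_cancel_right)
      hence "j < r - 1" by simp
      thus ?thesis using l u by blast
    qed
    have A: "(\<Sum>i<n. if d i < int (r-1) * a then c i else 0)
             \<le> (\<Sum>i<n. \<Sum>j<r-1. if (u i - (\<theta> + int j * a)) mod N < a then c i else 0)"
    proof (rule sum_mono)
      fix i assume "i \<in> {..<n}"
      show "(if d i < int (r-1) * a then c i else 0)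
             \<le> (\<Sum>j<r-1. if (u i - (\<theta> + int j * a)) mod N < a then c i else 0)"
      proof (cases "d i < int (r-1) * a")
        case True
        then obtain j where j: "j < r-1" "int j * a \<le> d i" "d i < int j * a + a" using cover by blast
        have "c i = (if (u i - (\<theta> + int j * a)) mod N < a then c i else 0)" using memb[OF j(2,3)] by simp
        also have "\<dots> \<le> (\<Sum>j<r-1. if (u i - (\<theta> + int j * a)) mod N < a then c i else 0)"
          by (rule member_le_sum) (use j c in auto)
        finally show ?thesis using True by simp
      next
        case False
        then show ?thesis using c by (simp add: sum_nonneg)
      qed
    qed
    also have "\<dots> = (\<Sum>j<r-1. w (\<theta> + int j * a))" unfolding w_def by (rule sum.swap)
    also have "\<dots> \<le> (\<Sum>j<r-1. s)" by (rule sum_mono) (use wj in auto)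
    also have "\<dots> = real (r-1) * s" by simp
    finally have A': "(\<Sum>i<n. if d i < int (r-1) * a then c i else 0) \<le> real (r-1) * s" .
    define gap where "gap = (\<Sum>i<n. if \<not> d i < int (r-1) * a then c i else 0)"
    have "(\<Sum>i<n. c i) = (\<Sum>i<n. if d i < int (r-1) * a then c i else 0) + gap"
      unfolding gap_def by (simp add: sum.distrib[symmetric] if_distrib cong: if_cong) (rule sum.cong, auto)
    hence gs: "s < gap" using A' rs r by (simp add: of_nat_diff algebra_simps)
    show "\<forall>x\<in>{0..int r * a - N}. (\<theta> - a + x) mod N \<in> ?G"
    proof
      fix x assume x: "x \<in> {0..int r * a - N}"
      have "gap \<le> w (\<theta> - a + x)" unfolding gap_def w_def
      proof (rule sum_mono)
        fix i assume "i \<in> {..<n}"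
        show "(if \<not> d i < int (r-1) * a then c i else 0) \<le> (if (u i - (\<theta> - a + x)) mod N < a then c i else 0)"
        proof (cases "d i < int (r-1) * a")
          case True then show ?thesis using c by simp
        next
          case False
          have e1: "(u i - (\<theta> - a + x)) mod N = (d i + a - x) mod N"
          proof -
            have "(u i - (\<theta> - a + x)) mod N = ((u i - \<theta>) + (a - x)) mod N" by (simp add: algebra_simps)
            also have "\<dots> = ((u i - \<theta>) mod N + (a - x)) mod N" by (rule mod_add_left_eq[symmetric])
            finally show ?thesis unfolding d_def by (simp add: algebra_simps)
          qed
          have lo: "N \<le> d i + a - x" using False x r by (simp add: of_nat_diff algebra_simps)
          have "(d i + a - x) mod N = (d i + a - x - N) mod N"
            by (metis mod_add_self2 diff_add_cancel)
          also have "\<dots> = d i + a - x - N" using lo d0[of i] x aN by (intro mod_pos_pos_trivial) auto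
          finally have "(u i - (\<theta> - a + x)) mod N < a" using e1 d0[of i] x by simp
          then show ?thesis using False by simp
        qed
      qed
      hence "s < w ((\<theta> - a + x) mod N)" using gs wmod by simp
      moreover have "(\<theta> - a + x) mod N \<in> {0..<N}" using N by simp
      ultimately show "(\<theta> - a + x) mod N \<in> ?G" by blast
    qed
  qed
  thus ?thesis unfolding w_def .
qed


lemma card_window:
  fixes N a \<theta> :: int
  assumes N: "N > 0" and a: "0 \<le> a" "a \<le> N"
  shows "card {v\<in>{0..<N}. (v - \<theta>) mod N < a} = nat a"
proof -
  have "bij_betw (\<lambda>v. (v - \<theta>) mod N) {v\<in>{0..<N}. (v - \<theta>) mod N < a} {0..<a}"
  proof (rule bij_betw_imageI)
    show "inj_on (\<lambda>v. (v - \<theta>) mod N) {v\<in>{0..<N}. (v - \<theta>) mod N < a}"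
    proof (rule inj_onI)
      fix x y assume xy: "x \<in> {v\<in>{0..<N}. (v - \<theta>) mod N < a}" "y \<in> {v\<in>{0..<N}. (v - \<theta>) mod N < a}"
        "(x - \<theta>) mod N = (y - \<theta>) mod N"
      hence "((x - \<theta>) + \<theta>) mod N = ((y - \<theta>) + \<theta>) mod N" by (metis mod_add_left_eq)
      thus "x = y" using xy by simp
    qed
    show "(\<lambda>v. (v - \<theta>) mod N) ` {v\<in>{0..<N}. (v - \<theta>) mod N < a} = {0..<a}"
    proof (intro equalityI subsetI)
      fix z assume "z \<in> (\<lambda>v. (v - \<theta>) mod N) ` {v\<in>{0..<N}. (v - \<theta>) mod N < a}"
      then show "z \<in> {0..<a}" using N by auto
    next
      fix z assume z: "z \<in> {0..<a}"
      define v where "v = (\<theta> + z) mod N"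
      have "(v - \<theta>) mod N = ((\<theta> + z) - \<theta>) mod N" unfolding v_def by (simp add: mod_diff_left_eq)
      also have "\<dots> = z" using z a by simp
      finally have "(v - \<theta>) mod N = z" .
      moreover have "v \<in> {0..<N}" unfolding v_def using N by simp
      ultimately show "z \<in> (\<lambda>v. (v - \<theta>) mod N) ` {v\<in>{0..<N}. (v - \<theta>) mod N < a}" using z by force
    qed
  qed
  hence "card {v\<in>{0..<N}. (v - \<theta>) mod N < a} = card {0..<a}" by (rule bij_betw_same_card)
  thus ?thesis by simp
qed

lemma count_theta:
  fixes N a \<theta> :: int and n :: nat and c :: "nat \<Rightarrow> real" and s :: real
  assumes N: "N > 0" and a: "0 \<le> a" "a \<le> N"
  shows "card {U \<in> PiE {..<n} (\<lambda>_. {0..<N}). (\<Sum>i<n. if (U i - \<theta>) mod N < a then c i else 0) \<le> s}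
         = (\<Sum>F\<in>{F. F \<subseteq> {..<n} \<and> sum c F \<le> s}. nat a ^ card F * nat (N - a) ^ (n - card F))"
proof -
  define PU where "PU = PiE {..<n} (\<lambda>_. {0..<N})"
  define fs where "fs U = {i\<in>{..<n}. (U i - \<theta>) mod N < a}" for U :: "nat \<Rightarrow> int"
  define W where "W = {v\<in>{0..<N}. (v - \<theta>) mod N < a}"
  define Fam where "Fam = {F. F \<subseteq> {..<n} \<and> sum c F \<le> s}"
  have sumfs: "(\<Sum>i<n. if (U i - \<theta>) mod N < a then c i else 0) = sum c (fs U)" for U
    unfolding fs_def by (rule sum.inter_filter[symmetric]) simp
  have finFam: "finite Fam" unfolding Fam_def by (rule finite_subset[of _ "Pow {..<n}"]) auto
  have eq: "{U \<in> PU. sum c (fs U) \<le> s} = (\<Union>F\<in>Fam. {U \<in> PU. fs U = F})"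
    unfolding Fam_def fs_def by auto
  have piece: "{U \<in> PU. fs U = F} = PiE {..<n} (\<lambda>i. if i \<in> F then W else {0..<N} - W)"
    if "F \<subseteq> {..<n}" for F
  proof (intro equalityI subsetI)
    fix U assume "U \<in> {U \<in> PU. fs U = F}"
    hence U: "\<forall>i\<in>{..<n}. U i \<in> {0..<N}" "U \<in> extensional {..<n}" "fs U = F"
      unfolding PU_def by (auto simp: PiE_iff)
    have "U i \<in> (if i \<in> F then W else {0..<N} - W)" if i: "i \<in> {..<n}" for i
    proof (cases "i \<in> F")
      case True
      hence "(U i - \<theta>) mod N < a" using U(3) unfolding fs_def by auto
      then show ?thesis using True U(1) i unfolding W_def by auto
    next
      case False
      hence "\<not> (U i - \<theta>) mod N < a" using U(3) i unfolding fs_def by auto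
      then show ?thesis using False U(1) i unfolding W_def by auto
    qed
    thus "U \<in> PiE {..<n} (\<lambda>i. if i \<in> F then W else {0..<N} - W)" using U(2) by (auto simp: PiE_iff)
  next
    fix U assume "U \<in> PiE {..<n} (\<lambda>i. if i \<in> F then W else {0..<N} - W)"
    hence U: "\<forall>i\<in>{..<n}. U i \<in> (if i \<in> F then W else {0..<N} - W)" "U \<in> extensional {..<n}"
      by (auto simp: PiE_iff)
    have "U i \<in> {0..<N}" if i: "i \<in> {..<n}" for i
    proof -
      have "U i \<in> (if i \<in> F then W else {0..<N} - W)" using U(1) i by blast
      moreover have "W \<subseteq> {0..<N}" unfolding W_def by auto
      ultimately show ?thesis by (cases "i \<in> F") auto
    qed
    hence "U \<in> PU" unfolding PU_def using U(2) by (auto simp: PiE_iff)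
    moreover have "fs U = F"
    proof (intro equalityI subsetI)
      fix i assume "i \<in> fs U"
      hence i: "i \<in> {..<n}" "(U i - \<theta>) mod N < a" unfolding fs_def by auto
      have "U i \<in> (if i \<in> F then W else {0..<N} - W)" using U(1) i by blast
      thus "i \<in> F" using i unfolding W_def by (cases "i \<in> F") auto
    next
      fix i assume i: "i \<in> F"
      hence i2: "i \<in> {..<n}" using that by auto
      have "U i \<in> (if i \<in> F then W else {0..<N} - W)" using U(1) i2 by blast
      hence "U i \<in> W" using i by simp
      thus "i \<in> fs U" using i2 unfolding W_def fs_def by auto
    qed
    ultimately show "U \<in> {U \<in> PU. fs U = F}" by simp
  qed
  have cW: "card W = nat a" unfolding W_def by (rule card_window[OF N a])
  have cW': "card ({0..<N} - W) = nat (N - a)"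
  proof -
    have "W \<subseteq> {0..<N}" unfolding W_def by auto
    hence "card ({0..<N} - W) = card {0..<N} - card W" by (intro card_Diff_subset) (auto intro: finite_subset)
    thus ?thesis using cW a N by simp
  qed
  have cpiece: "card {U \<in> PU. fs U = F} = nat a ^ card F * nat (N - a) ^ (n - card F)"
    if F: "F \<subseteq> {..<n}" for F
  proof -
    have "card {U \<in> PU. fs U = F} = (\<Prod>i<n. card (if i \<in> F then W else {0..<N} - W))"
      unfolding piece[OF F] by (simp add: card_PiE)
    also have "\<dots> = (\<Prod>i<n. if i \<in> F then nat a else nat (N - a))"
      by (rule prod.cong) (auto simp: cW cW')
    also have "\<dots> = nat a ^ card ({..<n} \<inter> F) * nat (N - a) ^ card ({..<n} - F)"
      by (simp add: prod.If_cases Diff_eq)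
    also have "\<dots> = nat a ^ card F * nat (N - a) ^ (n - card F)"
      using F by (simp add: Int_absorb1 card_Diff_subset finite_subset)
    finally show ?thesis .
  qed
  have finPU: "finite PU" unfolding PU_def by (intro finite_PiE) auto
  have "card {U \<in> PU. sum c (fs U) \<le> s} = (\<Sum>F\<in>Fam. card {U \<in> PU. fs U = F})"
    unfolding eq by (rule card_UN_disjoint[OF finFam]) (use finPU in auto)
  also have "\<dots> = (\<Sum>F\<in>Fam. nat a ^ card F * nat (N - a) ^ (n - card F))"
    by (rule sum.cong) (auto simp: Fam_def cpiece)
  finally show ?thesis unfolding PU_def Fam_def sumfs .
qed


lemma card_filter_sum: "finite A \<Longrightarrow> card {x\<in>A. P x} = (\<Sum>x\<in>A. if P x then 1 else 0)"
  by (simp add: sum.If_cases Int_def conj_commute)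

lemma FL_rat:
  fixes N a :: int and r n :: nat and c :: "nat \<Rightarrow> real" and s :: real
  assumes N: "N > 0" and r: "2 \<le> r"
    and h1: "int (r - 1) * a < N" and h2: "N \<le> int r * a"
    and c: "\<And>i. 0 \<le> c i" and rs: "real r * s < (\<Sum>i<n. c i)"
  shows "(\<Sum>F\<in>{F. F \<subseteq> {..<n} \<and> sum c F \<le> s}. (a / N) ^ card F * (1 - a / N) ^ (n - card F)) \<le> 1 - a / N"
proof -
  have apos: "a > 0"
  proof (rule ccontr)
    assume "\<not> a > 0"
    hence "int r * a \<le> 0" using r by (simp add: mult_nonneg_nonpos)
    thus False using N h2 by simp
  qed
  have "1 * a \<le> int (r-1) * a" by (rule mult_right_mono) (use r apos in auto)
  hence aN: "a < N" using h1 by simp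
  define PU where "PU = PiE {..<n} (\<lambda>_. {0..<N})"
  define w where "w U \<theta> = (\<Sum>i<n. if (U i - \<theta>) mod N < a then c i else 0)" for U :: "nat \<Rightarrow> int" and \<theta>
  define Fam where "Fam = {F. F \<subseteq> {..<n} \<and> sum c F \<le> s}"
  define T where "T = (\<Sum>F\<in>Fam. nat a ^ card F * nat (N - a) ^ (n - card F))"
  have finPU: "finite PU" unfolding PU_def by (intro finite_PiE) auto
  have cPU: "card PU = nat N ^ n" unfolding PU_def by (simp add: card_PiE)
  have ct: "card {U\<in>PU. w U \<theta> \<le> s} = T" for \<theta>
    unfolding PU_def w_def T_def Fam_def by (rule count_theta[OF N]) (use apos aN in auto)
  have cu: "card {\<theta>\<in>{0..<N}. w U \<theta> \<le> s} \<le> nat (N - a)" for U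
  proof -
    have "a \<le> int (card {\<theta>\<in>{0..<N}. s < w U \<theta>})"
      unfolding w_def by (rule window[OF N r h1 h2 c rs])
    moreover have "card {\<theta>\<in>{0..<N}. w U \<theta> \<le> s} + card {\<theta>\<in>{0..<N}. s < w U \<theta>} = card {0..<N}"
    proof -
      have "{0..<N} = {\<theta>\<in>{0..<N}. w U \<theta> \<le> s} \<union> {\<theta>\<in>{0..<N}. s < w U \<theta>}" by auto
      moreover have "{\<theta>\<in>{0..<N}. w U \<theta> \<le> s} \<inter> {\<theta>\<in>{0..<N}. s < w U \<theta>} = {}" by auto
      ultimately show ?thesis by (metis card_Un_disjoint finite_Un finite_atLeastLessThan_int)
    qed
    ultimately show ?thesis using N by simp
  qed
  have "(\<Sum>\<theta>\<in>{0..<N}. card {U\<in>PU. w U \<theta> \<le> s}) = (\<Sum>\<theta>\<in>{0..<N}. \<Sum>U\<in>PU. if w U \<theta> \<le> s then 1 else 0)"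
    using finPU by (simp add: card_filter_sum)
  also have "\<dots> = (\<Sum>U\<in>PU. \<Sum>\<theta>\<in>{0..<N}. if w U \<theta> \<le> s then 1 else 0)" by (rule sum.swap)
  also have "\<dots> = (\<Sum>U\<in>PU. card {\<theta>\<in>{0..<N}. w U \<theta> \<le> s})"
    by (rule sum.cong[OF refl], rule card_filter_sum[symmetric]) simp
  also have "\<dots> \<le> (\<Sum>U\<in>PU. nat (N - a))" by (rule sum_mono) (rule cu)
  finally have "nat N * T \<le> nat N ^ n * nat (N - a)" using ct cPU N by simp
  hence key: "real (nat N) * real T \<le> real (nat N) ^ n * real (nat (N - a))"
    by (metis of_nat_le_iff of_nat_mult of_nat_power)
  have rN: "real (nat N) = real_of_int N" using N by simp
  have rNa: "real (nat (N - a)) = real_of_int N - real_of_int a" using aN by simp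
  have ra: "real (nat a) = real_of_int a" using apos by simp
  have Npos: "real_of_int N > 0" using N by simp
  have termeq: "(a / N) ^ card F * (1 - a / N) ^ (n - card F)
      = real (nat a ^ card F * nat (N - a) ^ (n - card F)) / real_of_int N ^ n" if F: "F \<in> Fam" for F
  proof -
    have "card F \<le> n" using F unfolding Fam_def by (metis card_lessThan card_mono finite_lessThan mem_Collect_eq)
    hence nn: "real_of_int N ^ n = real_of_int N ^ card F * real_of_int N ^ (n - card F)"
      by (simp add: power_add[symmetric])
    have "1 - a / N = (N - a) / N" using Npos by (simp add: field_simps)
    hence "(a / N) ^ card F * (1 - a / N) ^ (n - card F)
        = real_of_int a ^ card F * (real_of_int N - real_of_int a) ^ (n - card F) / (real_of_int N ^ card F * real_of_int N ^ (n - card F))"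
      by (simp add: power_divide)
    also have "\<dots> = real (nat a ^ card F * nat (N - a) ^ (n - card F)) / real_of_int N ^ n"
      using nn ra rNa by simp
    finally show ?thesis .
  qed
  have "(\<Sum>F\<in>Fam. (a / N) ^ card F * (1 - a / N) ^ (n - card F)) = (\<Sum>F\<in>Fam. real (nat a ^ card F * nat (N - a) ^ (n - card F)) / real_of_int N ^ n)"
    by (rule sum.cong) (use termeq in auto)
  also have "\<dots> = real T / real_of_int N ^ n" unfolding T_def by (simp add: sum_divide_distrib)
  also have "\<dots> \<le> (1 - a / N)"
  proof -
    have "real T \<le> real_of_int N ^ n * (real_of_int N - real_of_int a) / real_of_int N"
      using key rN rNa Npos by (simp add: field_simps)
    hence "real T / real_of_int N ^ n \<le> (real_of_int N - real_of_int a) / real_of_int N"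
      using Npos by (simp add: field_simps)
    also have "\<dots> = 1 - a / N" using Npos by (simp add: field_simps)
    finally show ?thesis .
  qed
  finally show ?thesis unfolding Fam_def .
qed


lemma FL_real:
  fixes q :: real and r n :: nat and c :: "nat \<Rightarrow> real" and s :: real
  assumes r: "2 \<le> r" and q1: "1 / real r \<le> q" and q2: "real (r - 1) * q < 1"
    and c: "\<And>i. 0 \<le> c i" and rs: "real r * s < (\<Sum>i<n. c i)"
  shows "(\<Sum>F\<in>{F. F \<subseteq> {..<n} \<and> sum c F \<le> s}. q ^ card F * (1 - q) ^ (n - card F)) \<le> 1 - q"
proof -
  define Fam where "Fam = {F. F \<subseteq> {..<n} \<and> sum c F \<le> s}"
  define f where "f y = (\<Sum>F\<in>Fam. y ^ card F * (1 - y) ^ (n - card F)) - (1 - y)" for y :: real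
  define x where "x m = real_of_int \<lceil>q * real m\<rceil> / real m" for m :: nat
  have rpos: "real r > 0" using r by simp
  have qpos: "q > 0" using q1 rpos by (smt (verit) divide_pos_pos)
  have qm: "q * real m \<ge> real m / real r" for m using q1 rpos
    by (metis divide_inverse mult.commute mult_right_mono of_nat_0_le_iff inverse_eq_divide mult.left_neutral times_divide_eq_right)
  have lo: "q \<le> x m" if "m > 0" for m
    unfolding x_def using that by (simp add: le_divide_eq)
  have hi: "x m \<le> q + 1 / real m" if "m > 0" for m
  proof -
    have "real_of_int \<lceil>q * real m\<rceil> \<le> q * real m + 1" by linarith
    hence "x m \<le> (q * real m + 1) / real m" unfolding x_def by (intro divide_right_mono) auto
    also have "\<dots> = q + 1 / real m" using that by (simp add: field_simps)
    finally show ?thesis .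
  qed
  have xlim: "x \<longlonglongrightarrow> q"
  proof (rule tendsto_sandwich[of "\<lambda>m. q" x sequentially "\<lambda>m. q + 1 / real m"])
    show "\<forall>\<^sub>F m in sequentially. q \<le> x m" using eventually_gt_at_top[of "0::nat"] by (rule eventually_mono) (rule lo)
    show "\<forall>\<^sub>F m in sequentially. x m \<le> q + 1 / real m" using eventually_gt_at_top[of "0::nat"] by (rule eventually_mono) (rule hi)
    show "(\<lambda>m. q) \<longlonglongrightarrow> q" by simp
    have "(\<lambda>m. q + inverse (real m)) \<longlonglongrightarrow> q + 0" by (intro tendsto_intros lim_inverse_n)
    thus "(\<lambda>m. q + 1 / real m) \<longlonglongrightarrow> q" by (simp add: inverse_eq_divide)
  qed
  have flim: "(\<lambda>m. f (x m)) \<longlonglongrightarrow> f q" unfolding f_def by (intro tendsto_intros xlim)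
  define M where "M = nat \<lceil>real (r - 1) / (1 - real (r - 1) * q)\<rceil> + 1"
  have ev: "\<forall>\<^sub>F m in sequentially. f (x m) \<le> 0"
    using eventually_ge_at_top[of M]
  proof (rule eventually_mono)
    fix m assume mM: "M \<le> m"
    have mpos: "m > 0" using mM unfolding M_def by simp
    have dpos: "1 - real (r - 1) * q > 0" using q2 by simp
    have "real (r - 1) / (1 - real (r - 1) * q) \<le> real m"
    proof -
      have "real (r - 1) / (1 - real (r - 1) * q) \<le> real (nat \<lceil>real (r - 1) / (1 - real (r - 1) * q)\<rceil>)" by linarith
      also have "\<dots> \<le> real m"
      proof (rule of_nat_mono)
        show "nat \<lceil>real (r - 1) / (1 - real (r - 1) * q)\<rceil> \<le> m" using mM unfolding M_def by linarith
      qed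
      finally show ?thesis .
    qed
    hence m1: "real (r - 1) \<le> real m * (1 - real (r - 1) * q)" using dpos by (simp add: divide_le_eq mult.commute)
    define a where "a = \<lceil>q * real m\<rceil>"
    define N where "N = int m"
    have Npos: "N > 0" unfolding N_def using mpos by simp
    have h1: "int (r - 1) * a < N"
    proof -
      have "real_of_int a < q * real m + 1" unfolding a_def by linarith
      moreover have "real (r - 1) > 0" using r by simp
      ultimately have "real (r - 1) * real_of_int a < real (r - 1) * (q * real m + 1)" by simp
      also have "\<dots> \<le> real m" using m1 by (simp add: algebra_simps)
      finally have "real_of_int (int (r - 1) * a) < real_of_int N" unfolding N_def by simp
      thus ?thesis by linarith
    qed
    have h2: "N \<le> int r * a"
    proof -
      have "real m \<le> real r * (q * real m)" using qm[of m] rpos by (simp add: field_simps)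
      also have "\<dots> \<le> real r * real_of_int a" unfolding a_def using rpos by (intro mult_left_mono) auto
      finally have "real_of_int N \<le> real_of_int (int r * a)" unfolding N_def by simp
      thus ?thesis by linarith
    qed
    have "(\<Sum>F\<in>Fam. (real_of_int a / real_of_int N) ^ card F * (1 - real_of_int a / real_of_int N) ^ (n - card F))
          \<le> 1 - real_of_int a / real_of_int N"
      unfolding Fam_def by (rule FL_rat[OF Npos r h1 h2 c rs])
    moreover have "real_of_int a / real_of_int N = x m" unfolding a_def N_def x_def by simp
    ultimately show "f (x m) \<le> 0" unfolding f_def by simp
  qed
  have "f q \<le> 0" by (rule tendsto_le[OF trivial_limit_sequentially tendsto_const flim ev])
  thus ?thesis unfolding f_def Fam_def by simp
qed




lemma cyl_prob:
  fixes p :: real and n :: nat and Fam :: "nat set set"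
  assumes p: "0 \<le> p" "p \<le> 1" and Fam: "\<And>F. F \<in> Fam \<Longrightarrow> F \<subseteq> {..<n}"
  shows "{\<omega>\<in>space (bern_space p). {i\<in>{..<n}. \<not> \<omega> i} \<in> Fam} \<in> sets (bern_space p)"
    and "measure (bern_space p) {\<omega>\<in>space (bern_space p). {i\<in>{..<n}. \<not> \<omega> i} \<in> Fam}
         = (\<Sum>F\<in>Fam. (1 - p) ^ card F * p ^ (n - card F))"
proof -
  define M where "M = (\<lambda>_::nat. measure_pmf (bernoulli_pmf p))"
  interpret PP: product_prob_space M UNIV unfolding M_def by unfold_locales
  have sM: "space (M i) = UNIV" for i by (simp add: M_def)
  have bs: "bern_space p = PiM UNIV M" unfolding bern_space_def M_def by simp
  have finFam: "finite Fam" by (rule finite_subset[of _ "Pow {..<n}"]) (use Fam in auto)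
  define cyl where "cyl F = prod_emb UNIV M {..<n} (PiE {..<n} (\<lambda>i. {i \<notin> F}))" for F
  have cylsets: "cyl F \<in> sets (PiM UNIV M)" for F
    unfolding cyl_def by (rule sets_PiM_I) (auto simp: M_def)
  have cyleq: "cyl F = {\<omega>\<in>space (PiM UNIV M). {i\<in>{..<n}. \<not> \<omega> i} = F}" if F: "F \<subseteq> {..<n}" for F
  proof (intro equalityI subsetI)
    fix \<omega> assume "\<omega> \<in> cyl F"
    hence w: "\<omega> \<in> space (PiM UNIV M)" "restrict \<omega> {..<n} \<in> PiE {..<n} (\<lambda>i. {i \<notin> F})"
      unfolding cyl_def prod_emb_def by (auto simp: space_PiM)
    have "\<forall>i<n. \<omega> i = (i \<notin> F)"
    proof (intro allI impI)
      fix i assume "i < n"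
      then show "\<omega> i = (i \<notin> F)" using w(2) by (auto simp: PiE_iff)
    qed
    hence "{i\<in>{..<n}. \<not> \<omega> i} = F" using F by auto
    thus "\<omega> \<in> {\<omega>\<in>space (PiM UNIV M). {i\<in>{..<n}. \<not> \<omega> i} = F}" using w by simp
  next
    fix \<omega> assume "\<omega> \<in> {\<omega>\<in>space (PiM UNIV M). {i\<in>{..<n}. \<not> \<omega> i} = F}"
    hence w: "\<omega> \<in> space (PiM UNIV M)" "{i\<in>{..<n}. \<not> \<omega> i} = F" by auto
    have "\<omega> i = (i \<notin> F)" if "i < n" for i using w(2) that by auto
    hence "restrict \<omega> {..<n} \<in> PiE {..<n} (\<lambda>i. {i \<notin> F})" by (auto simp: PiE_iff)
    moreover have "\<omega> \<in> extensional UNIV" by simp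
    ultimately show "\<omega> \<in> cyl F" using w(1) unfolding cyl_def prod_emb_iff by (simp add: space_PiM sM)
  qed
  have U: "{\<omega>\<in>space (PiM UNIV M). {i\<in>{..<n}. \<not> \<omega> i} \<in> Fam} = (\<Union>F\<in>Fam. cyl F)"
  proof (intro equalityI subsetI)
    fix \<omega> assume w: "\<omega> \<in> {\<omega>\<in>space (PiM UNIV M). {i\<in>{..<n}. \<not> \<omega> i} \<in> Fam}"
    let ?F = "{i\<in>{..<n}. \<not> \<omega> i}"
    have "?F \<in> Fam" using w by simp
    moreover have "\<omega> \<in> cyl ?F" using cyleq[of ?F] w by auto
    ultimately show "\<omega> \<in> (\<Union>F\<in>Fam. cyl F)" by blast
  next
    fix \<omega> assume "\<omega> \<in> (\<Union>F\<in>Fam. cyl F)"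
    then obtain F where F: "F \<in> Fam" "\<omega> \<in> cyl F" by blast
    then show "\<omega> \<in> {\<omega>\<in>space (PiM UNIV M). {i\<in>{..<n}. \<not> \<omega> i} \<in> Fam}"
      using cyleq[OF Fam[OF F(1)]] by auto
  qed
  show "{\<omega>\<in>space (bern_space p). {i\<in>{..<n}. \<not> \<omega> i} \<in> Fam} \<in> sets (bern_space p)"
    unfolding bs U using finFam cylsets by auto
  have mcyl: "measure (PiM UNIV M) (cyl F) = (1 - p) ^ card F * p ^ (n - card F)" if F: "F \<subseteq> {..<n}" for F
  proof -
    have "measure (PiM UNIV M) (cyl F) = (\<Prod>i<n. measure (M i) {i \<notin> F})"
      unfolding cyl_def by (rule PP.measure_PiM_emb) (auto simp: M_def)
    also have "\<dots> = (\<Prod>i<n. if i \<in> F then 1 - p else p)"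
      by (rule prod.cong) (auto simp: M_def measure_pmf_single p)
    also have "\<dots> = (1 - p) ^ card ({..<n} \<inter> F) * p ^ card ({..<n} - F)"
      by (simp add: prod.If_cases Diff_eq)
    also have "\<dots> = (1 - p) ^ card F * p ^ (n - card F)"
      using F by (simp add: Int_absorb1 card_Diff_subset finite_subset)
    finally show ?thesis .
  qed
  have disj: "disjoint_family_on cyl Fam"
  proof (unfold disjoint_family_on_def, intro ballI impI)
    fix F G assume FG: "F \<in> Fam" "G \<in> Fam" "F \<noteq> G"
    show "cyl F \<inter> cyl G = {}" using cyleq[OF Fam[OF FG(1)]] cyleq[OF Fam[OF FG(2)]] FG(3) by auto
  qed
  have "measure (PiM UNIV M) (\<Union>F\<in>Fam. cyl F) = (\<Sum>F\<in>Fam. measure (PiM UNIV M) (cyl F))"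
    by (rule measure_finite_Union[OF finFam _ disj]) (use cylsets in auto)
  also have "\<dots> = (\<Sum>F\<in>Fam. (1 - p) ^ card F * p ^ (n - card F))"
    by (rule sum.cong) (use mcyl Fam in auto)
  finally show "measure (bern_space p) {\<omega>\<in>space (bern_space p). {i\<in>{..<n}. \<not> \<omega> i} \<in> Fam}
         = (\<Sum>F\<in>Fam. (1 - p) ^ card F * p ^ (n - card F))" unfolding bs U .
qed


lemma main_bound:
  fixes p t :: real and r :: nat and c :: "nat \<Rightarrow> real"
  assumes r: "2 \<le> r" and p: "0 \<le> p" "p \<le> 1" and q1: "1 / real r \<le> 1 - p" and q2: "real (r - 1) * (1 - p) < 1"
    and rs: "real r * (1 - t) < 1" and c: "stake_seq c"
  shows "success_prob p c t \<le> p"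
proof -
  have c0: "\<And>i. 0 \<le> c i" and csum: "c sums 1" using c unfolding stake_seq_def by auto
  have summc: "summable c" using csum by (rule sums_summable)
  have "(\<lambda>n. \<Sum>i<n. c i) \<longlonglongrightarrow> 1" using csum by (simp add: sums_def)
  hence "\<forall>\<^sub>F n in sequentially. real r * (1 - t) < (\<Sum>i<n. c i)" using rs by (rule order_tendstoD)
  then obtain n where n: "real r * (1 - t) < (\<Sum>i<n. c i)" by (meson eventually_sequentially order_refl)
  define s where "s = 1 - t"
  define Fam where "Fam = {F. F \<subseteq> {..<n} \<and> sum c F \<le> s}"
  let ?B = "{\<omega>\<in>space (bern_space p). {i\<in>{..<n}. \<not> \<omega> i} \<in> Fam}"
  have Fam_sub: "\<And>F. F \<in> Fam \<Longrightarrow> F \<subseteq> {..<n}" unfolding Fam_def by auto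
  have sub: "{\<omega> \<in> space (bern_space p). stake_sum c \<omega> \<ge> t} \<subseteq> ?B"
  proof
    fix \<omega> assume w: "\<omega> \<in> {\<omega> \<in> space (bern_space p). stake_sum c \<omega> \<ge> t}"
    define g where "g i = c i * (if \<omega> i then 1 else 0)" for i
    have g0: "0 \<le> g i" "g i \<le> c i" for i unfolding g_def using c0[of i] by auto
    have summg: "summable g" by (rule summable_comparison_test[OF _ summc]) (use g0 in auto)
    have "stake_sum c \<omega> = (\<Sum>k. g (k + n)) + (\<Sum>i<n. g i)"
      unfolding stake_sum_def g_def[symmetric] by (rule suminf_split_initial_segment[OF summg])
    moreover have "(\<Sum>k. g (k + n)) \<le> (\<Sum>k. c (k + n))"
      by (rule suminf_le) (use g0 summg summc summable_ignore_initial_segment in auto)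
    moreover have "1 = (\<Sum>k. c (k + n)) + (\<Sum>i<n. c i)"
      using suminf_split_initial_segment[OF summc, of n] csum by (simp add: sums_iff)
    moreover have "(\<Sum>i<n. c i) = (\<Sum>i<n. g i) + sum c {i\<in>{..<n}. \<not> \<omega> i}"
    proof -
      have "(\<Sum>i<n. c i) = (\<Sum>i<n. g i + (if \<not> \<omega> i then c i else 0))"
        by (rule sum.cong) (auto simp: g_def)
      also have "\<dots> = (\<Sum>i<n. g i) + (\<Sum>i<n. if \<not> \<omega> i then c i else 0)" by (rule sum.distrib)
      also have "(\<Sum>i<n. if \<not> \<omega> i then c i else 0) = sum c {i\<in>{..<n}. \<not> \<omega> i}"
        by (rule sum.inter_filter[symmetric]) simp
      finally show ?thesis .
    qed
    ultimately have "sum c {i\<in>{..<n}. \<not> \<omega> i} \<le> 1 - stake_sum c \<omega>" by linarith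
    hence "sum c {i\<in>{..<n}. \<not> \<omega> i} \<le> s" using w unfolding s_def by simp
    thus "\<omega> \<in> ?B" using w unfolding Fam_def by auto
  qed
  have Bsets: "?B \<in> sets (bern_space p)" by (rule cyl_prob(1)[OF p Fam_sub])
  interpret BP: prob_space "bern_space p" unfolding bern_space_def by (rule prob_space_PiM) (rule prob_space_measure_pmf)
  have "success_prob p c t \<le> measure (bern_space p) ?B"
    unfolding success_prob_def by (rule BP.finite_measure_mono[OF sub Bsets])
  also have "\<dots> = (\<Sum>F\<in>Fam. (1 - p) ^ card F * p ^ (n - card F))" by (rule cyl_prob(2)[OF p Fam_sub])
  also have "\<dots> = (\<Sum>F\<in>Fam. (1 - p) ^ card F * (1 - (1 - p)) ^ (n - card F))" by simp
  also have "\<dots> \<le> 1 - (1 - p)"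
    unfolding Fam_def by (rule FL_real[OF r q1 q2 c0]) (use n s_def in simp)
  finally show ?thesis by simp
qed

lemma bold_eq:
  fixes t :: real assumes "1/2 < t" "t \<le> 1"
  shows "bold_play t = (\<lambda>i. if i = 0 then 1 else 0)"
proof -
  have t0: "t > 0" using assms by simp
  have "1 \<le> 1 / t" using assms t0 by (simp add: field_simps)
  moreover have "1 / t < 2" using assms t0 by (simp add: field_simps)
  ultimately have "\<lfloor>1 / t\<rfloor> = 1" by (simp add: floor_eq_iff)
  thus ?thesis unfolding bold_play_def by (auto simp: fun_eq_iff)
qed

lemma bold_facts:
  fixes p t :: real assumes p: "0 \<le> p" "p \<le> 1" and t: "1/2 < t" "t \<le> 1"
  shows "stake_seq (bold_play t)" and "success_prob p (bold_play t) t = p"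
proof -
  have b: "bold_play t = (\<lambda>i. if i = 0 then 1 else 0)" by (rule bold_eq[OF t])
  have "(\<lambda>i::nat. if i = 0 then (\<lambda>_. 1::real) i else 0) sums (\<lambda>_. 1::real) 0" by (rule sums_single)
  thus "stake_seq (bold_play t)" unfolding b stake_seq_def by simp
  have ss: "stake_sum (bold_play t) \<omega> = (if \<omega> 0 then 1 else 0)" for \<omega>
  proof -
    have "stake_sum (bold_play t) \<omega> = (\<Sum>i\<in>{0}. (if i = 0 then 1 else 0) * (if \<omega> i then 1 else 0))"
      unfolding stake_sum_def b by (rule suminf_finite) auto
    thus ?thesis by simp
  qed
  have "{\<omega> \<in> space (bern_space p). stake_sum (bold_play t) \<omega> \<ge> t}
        = {\<omega>\<in>space (bern_space p). {i\<in>{..<1}. \<not> \<omega> i} \<in> {{}}}"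
  proof -
    have one: "({i\<in>{..<1::nat}. \<not> \<omega> i} \<in> {{}}) = \<omega> 0" for \<omega> :: "nat \<Rightarrow> bool"
    proof -
      have "({i\<in>{..<1::nat}. \<not> \<omega> i} \<in> {{}}) = (\<forall>i<1. \<omega> i)"
      proof
        assume "{i\<in>{..<1::nat}. \<not> \<omega> i} \<in> {{}}" thus "\<forall>i<1. \<omega> i" by auto
      next
        assume h: "\<forall>i<1. \<omega> i"
        have "{i\<in>{..<1::nat}. \<not> \<omega> i} = {}"
        proof (intro equalityI subsetI)
          fix i assume "i \<in> {i\<in>{..<1::nat}. \<not> \<omega> i}"
          thus "i \<in> {}" using h by blast
        qed simp
        thus "{i\<in>{..<1::nat}. \<not> \<omega> i} \<in> {{}}" by simp
      qed
      also have "\<dots> = \<omega> 0" by (metis less_one)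
      finally show ?thesis .
    qed
    show ?thesis using t by (simp only: one ss) auto
  qed
  also have "measure (bern_space p) \<dots> = (\<Sum>F\<in>{{}}. (1 - p) ^ card F * p ^ (1 - card F))"
    using cyl_prob(2)[OF p, of "{{}}" 1] by simp
  finally show "success_prob p (bold_play t) t = p" unfolding success_prob_def by simp
qed

theorem theorem12:
  fixes k :: nat and p t :: real
  assumes "k \<ge> 1"
    and "real k / real (k + 1) < p" and "p \<le> real (k + 1) / real (k + 2)"
    and "real (k + 1) / real (k + 2) < t" and "t \<le> 1"
  shows "opt_prob p t = p \<and> success_prob p (bold_play t) t = opt_prob p t"
proof -
  define r where "r = k + 2"
  have r: "2 \<le> r" unfolding r_def by simp
  have pk: "real k < p * (real k + 1)" using assms(2) by (simp add: field_simps)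
  have pk2: "p * (real k + 2) \<le> real k + 1" using assms(3) by (simp add: field_simps)
  have tk: "real k + 1 < t * (real k + 2)" using assms(4) by (simp add: field_simps)
  have "0 < p * (real k + 1)" using pk by (smt (verit) of_nat_0_le_iff)
  hence p0: "0 \<le> p" by (simp add: zero_less_mult_iff)
  have "p * (real k + 2) < real k + 2" using pk2 by linarith
  hence "p * (real k + 2) < 1 * (real k + 2)" by simp
  hence p1: "p \<le> 1" by (simp add: mult_less_cancel_right)
  have q1: "1 / real r \<le> 1 - p" unfolding r_def using pk2 by (simp add: field_simps)
  have q2: "real (r - 1) * (1 - p) < 1" unfolding r_def using pk by (simp add: algebra_simps)
  have rs: "real r * (1 - t) < 1" unfolding r_def using tk by (simp add: algebra_simps)
  have t2: "1/2 < t"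
  proof (rule ccontr)
    assume "\<not> 1/2 < t"
    hence "t * (real k + 2) \<le> 1/2 * (real k + 2)" by (intro mult_right_mono) auto
    hence "real k + 1 < 1/2 * (real k + 2)" by (rule less_le_trans[OF tk])
    moreover have "real k \<ge> 1" using assms(1) by simp
    ultimately show False by (simp add: field_simps)
  qed
  have bound: "success_prob p c t \<le> p" if "stake_seq c" for c
    by (rule main_bound[OF r p0 p1 q1 q2 rs that])
  note bf = bold_facts[OF p0 p1 t2 assms(5)]
  have ne: "{c. stake_seq c} \<noteq> {}" using bf(1) by blast
  have bdd: "bdd_above ((\<lambda>c. success_prob p c t) ` {c. stake_seq c})"
    using bound by (intro bdd_aboveI[of _ p]) auto
  have le: "opt_prob p t \<le> p" unfolding opt_prob_def by (rule cSUP_least[OF ne]) (use bound in auto)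
  have ge: "p \<le> opt_prob p t"
  proof -
    have "success_prob p (bold_play t) t \<le> opt_prob p t"
      unfolding opt_prob_def by (rule cSUP_upper[OF _ bdd]) (use bf(1) in simp)
    thus ?thesis using bf(2) by simp
  qed
  show ?thesis using le ge bf(2) by simp
qed


end
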